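(* Let $\{X(t)\colon t\in\mathbb{R}\}$ be a centered stationary Gaussian process with twice differentiable covariance function $r(\tau)=\mathbb{E}(X(t)X(t+\tau))$. (a) If $r(0)=-\ddot r(0)=1$, then $|r(t)|\le1$, $|\dot r(t)|\le1$, $|\ddot r(t)|\le1$ for all $t$. (b) If $r(0)=-\ddot r(0)=1$ and $\int_0^\infty(|r(\tau)|+|\dot r(\tau)|+|\ddot r(\tau)|)\,d\tau<\infty$, then $r,\dot r,\ddot r\in L^p(\mathbb{R})$ for all $p\ge1$. (c) If $r(0)=-\ddot r(0)=1$ and the process is $\alpha$-mixing with $\alpha(T)\sim T^{-\mu}$ as $T\to\infty$ for some $\mu>4$, then $r,\dot r,\ddot r\in L^p(\mathbb{R})$ for all $p\ge1$; in particular $\int_0^\infty(|r(\tau)|+|\dot r(\tau)|+|\ddot r(\tau)|)\,d\tau<\infty$.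
   Context: For $-\infty\le a\le b\le\infty$, $\mathcal F_a^b$ is the $\sigma$-algebra generated by $\{X(s)\colon a\le s\le b\}$, and $\alpha(t)=\sup\{|\mathbf P(U)\mathbf P(V)-\mathbf P(U\cap V)|\colon U\in\mathcal F_{-\infty}^0,\ V\in\mathcal F_t^\infty\}$. *)

theory Defs
  imports "HOL-Probability.Probability" "HOL-Library.Landau_Symbols"
begin

definition centered_gaussian_rv :: "'a measure \<Rightarrow> ('a \<Rightarrow> real) \<Rightarrow> bool" where
  "centered_gaussian_rv M Y \<longleftrightarrow>
     Y \<in> borel_measurable M \<and>
     ((AE \<omega> in M. Y \<omega> = 0) \<or> (\<exists>s>0. distributed M lborel Y (normal_density 0 s)))"

text \<open>A centered Gaussian process: every finite linear combination is centered Gaussian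
  (equivalently all finite-dimensional distributions are centered multivariate normal).\<close>
definition centered_gaussian_process :: "'a measure \<Rightarrow> (real \<Rightarrow> 'a \<Rightarrow> real) \<Rightarrow> bool" where
  "centered_gaussian_process M X \<longleftrightarrow>
     (\<forall>t. X t \<in> borel_measurable M) \<and>
     (\<forall>S c. finite S \<longrightarrow> centered_gaussian_rv M (\<lambda>\<omega>. \<Sum>s\<in>S. c s * X s \<omega>))"

definition gen_sigma :: "'a measure \<Rightarrow> (real \<Rightarrow> 'a \<Rightarrow> real) \<Rightarrow> real set \<Rightarrow> 'a set set" where
  "gen_sigma M X I = sigma_sets (space M)
     {X s -` B \<inter> space M | s B. s \<in> I \<and> B \<in> sets borel}"

definition alpha_coeff :: "'a measure \<Rightarrow> (real \<Rightarrow> 'a \<Rightarrow> real) \<Rightarrow> real \<Rightarrow> real" where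
  "alpha_coeff M X t = Sup {\<bar>measure M U * measure M V - measure M (U \<inter> V)\<bar> | U V.
      U \<in> gen_sigma M X {..0} \<and> V \<in> gen_sigma M X {t..}}"

definition alpha_mixing :: "'a measure \<Rightarrow> (real \<Rightarrow> 'a \<Rightarrow> real) \<Rightarrow> bool" where
  "alpha_mixing M X \<longleftrightarrow> (alpha_coeff M X \<longlongrightarrow> 0) at_top"

end

theory Submission
  imports Defs
begin
lemma std_normal_cos:
  "(\<integral>x. std_normal_density x * cos (s * x) \<partial>lborel) = exp (- (s^2) / 2)"
proof -
  interpret real_distribution std_normal_distribution by (rule real_dist_normal_dist)
  have int: "integrable std_normal_distribution (\<lambda>x. iexp (s * x))"
    by (rule integrable_iexp) auto
  have "Re (char std_normal_distribution s) = exp (- (s^2) / 2)"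
    by (simp add: char_std_normal_distribution)
  moreover have "Re (char std_normal_distribution s) = (LINT x|std_normal_distribution. cos (s * x))"
    unfolding char_def using integral_Re[OF int]
    by (simp add: Re_exp)
  moreover have "(LINT x|std_normal_distribution. cos (s * x)) = (\<integral>x. std_normal_density x * cos (s * x) \<partial>lborel)"
    by (subst integral_density) auto
  ultimately show ?thesis by simp
qed

lemma (in prob_space) gauss_cos:
  assumes "centered_gaussian_rv M Y"
  shows "integrable M (\<lambda>\<omega>. (Y \<omega>)\<^sup>2) \<and> expectation (\<lambda>\<omega>. cos (Y \<omega>)) = exp (- expectation (\<lambda>\<omega>. (Y \<omega>)\<^sup>2) / 2)"
proof -
  have Ym[measurable]: "Y \<in> borel_measurable M" using assms unfolding centered_gaussian_rv_def by auto
  from assms consider "AE \<omega> in M. Y \<omega> = 0" | s where "s > 0" "distributed M lborel Y (normal_density 0 s)"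
    unfolding centered_gaussian_rv_def by blast
  then show ?thesis
  proof cases
    case 1
    have i: "integrable M (\<lambda>\<omega>. (Y \<omega>)\<^sup>2) = integrable M (\<lambda>_. 0::real)"
      by (rule integrable_cong_AE) (use 1 in auto)
    have e1: "expectation (\<lambda>\<omega>. (Y \<omega>)\<^sup>2) = expectation (\<lambda>_. 0::real)"
      by (rule integral_cong_AE) (use 1 in auto)
    have e2: "expectation (\<lambda>\<omega>. cos (Y \<omega>)) = expectation (\<lambda>_. 1::real)"
      by (rule integral_cong_AE) (use 1 in auto)
    show ?thesis using i e1 e2 by (simp add: prob_space)
  next
    case 2
    have "integrable lborel (\<lambda>x. normal_density 0 s x * x\<^sup>2)"
      using integrable_normal_moment[where \<mu>=0 and \<sigma>=s and k=2] 2(1) by simp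
    then have i: "integrable M (\<lambda>\<omega>. (Y \<omega>)\<^sup>2)"
      by (subst distributed_integrable[OF 2(2), symmetric]) auto
    have v: "expectation (\<lambda>\<omega>. (Y \<omega>)\<^sup>2) = s\<^sup>2"
      using normal_distributed_variance[OF 2] normal_distributed_expectation[OF 2] by simp
    have DZ: "distributed M lborel (\<lambda>x. (Y x - 0) / s) std_normal_density"
      using normal_standard_normal_convert[OF 2(1)] 2(2) by simp
    have "(\<integral>x. std_normal_density x * cos (s * x) \<partial>lborel) = expectation (\<lambda>x. cos (s * ((Y x - 0) / s)))"
      by (rule distributed_integral[OF DZ]) auto
    then have "expectation (\<lambda>\<omega>. cos (Y \<omega>)) = exp (- (s^2) / 2)"
      using 2(1) by (simp add: std_normal_cos)
    then show ?thesis using i v by simp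
  qed
qed

definition inlc :: "(real \<Rightarrow> 'a \<Rightarrow> real) \<Rightarrow> real set \<Rightarrow> ('a \<Rightarrow> real) \<Rightarrow> bool" where
  "inlc X I A \<longleftrightarrow> (\<exists>S p. finite S \<and> S \<subseteq> I \<and> A = (\<lambda>\<omega>. \<Sum>s\<in>S. p s * X s \<omega>))"

lemma inlc_X: "s \<in> I \<Longrightarrow> inlc X I (X s)"
  unfolding inlc_def by (intro exI[of _ "{s}"] exI[of _ "\<lambda>_. 1"]) auto

lemma inlc_scale:
  assumes "inlc X I A" shows "inlc X I (\<lambda>\<omega>. u * A \<omega>)"
proof -
  obtain S p where S: "finite S" "S \<subseteq> I" "A = (\<lambda>\<omega>. \<Sum>s\<in>S. p s * X s \<omega>)"
    using assms unfolding inlc_def by blast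
  show ?thesis unfolding inlc_def
    by (intro exI[of _ S] exI[of _ "\<lambda>s. u * p s"]) (auto simp: S sum_distrib_left mult.assoc)
qed

lemma inlc_add:
  assumes "inlc X I A" "inlc X I B" shows "inlc X I (\<lambda>\<omega>. A \<omega> + B \<omega>)"
proof -
  obtain S p where S: "finite S" "S \<subseteq> I" "A = (\<lambda>\<omega>. \<Sum>s\<in>S. p s * X s \<omega>)"
    using assms(1) unfolding inlc_def by blast
  obtain T q where T: "finite T" "T \<subseteq> I" "B = (\<lambda>\<omega>. \<Sum>s\<in>T. q s * X s \<omega>)"
    using assms(2) unfolding inlc_def by blast
  define w where "w s = (if s \<in> S then p s else 0) + (if s \<in> T then q s else 0)" for s
  have "(\<lambda>\<omega>. A \<omega> + B \<omega>) = (\<lambda>\<omega>. \<Sum>s\<in>S\<union>T. w s * X s \<omega>)"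
  proof
    fix \<omega>
    have "(\<Sum>s\<in>S\<union>T. w s * X s \<omega>) = (\<Sum>s\<in>S\<union>T. if s \<in> S then p s * X s \<omega> else 0)
        + (\<Sum>s\<in>S\<union>T. if s \<in> T then q s * X s \<omega> else 0)"
      unfolding w_def distrib_right sum.distrib[symmetric] by (intro sum.cong) auto
    moreover have "\<dots> = (\<Sum>s\<in>(S\<union>T)\<inter>S. p s * X s \<omega>) + (\<Sum>s\<in>(S\<union>T)\<inter>T. q s * X s \<omega>)"
      using sum.inter_restrict[OF finite_UnI[OF S(1) T(1)], symmetric, where g="\<lambda>s. p s * X s \<omega>" and B=S]
        sum.inter_restrict[OF finite_UnI[OF S(1) T(1)], symmetric, where g="\<lambda>s. q s * X s \<omega>" and B=T]
      by simp
    moreover have "(S\<union>T)\<inter>S = S" "(S\<union>T)\<inter>T = T" by auto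
    ultimately show "A \<omega> + B \<omega> = (\<Sum>s\<in>S\<union>T. w s * X s \<omega>)" using S T by simp
  qed
  then show ?thesis unfolding inlc_def using S T by blast
qed

lemma inlc_mono: "inlc X I A \<Longrightarrow> I \<subseteq> J \<Longrightarrow> inlc X J A"
  unfolding inlc_def by blast

lemma inlc_gauss: "inlc X I A \<Longrightarrow> centered_gaussian_process M X \<Longrightarrow> centered_gaussian_rv M A"
  unfolding inlc_def centered_gaussian_process_def by blast

definition Fs :: "'a measure \<Rightarrow> (real \<Rightarrow> 'a \<Rightarrow> real) \<Rightarrow> real set \<Rightarrow> 'a measure" where
  "Fs M X I = sigma (space M) {X s -` B \<inter> space M | s B. s \<in> I \<and> B \<in> sets borel}"

lemma sets_Fs: "sets (Fs M X I) = gen_sigma M X I"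
  unfolding Fs_def gen_sigma_def by (subst sets_measure_of) auto

lemma space_Fs: "space (Fs M X I) = space M"
  unfolding Fs_def by (subst space_measure_of) auto

lemma X_Fs: "s \<in> I \<Longrightarrow> X s \<in> borel_measurable (Fs M X I)"
  by (rule measurableI) (auto simp: space_Fs sets_Fs gen_sigma_def)

lemma inlc_meas: "inlc X I A \<Longrightarrow> A \<in> borel_measurable (Fs M X I)"
  unfolding inlc_def
proof (elim exE conjE)
  fix S p assume S: "finite S" "S \<subseteq> I" "A = (\<lambda>\<omega>. \<Sum>s\<in>S. p s * X s \<omega>)"
  have "(\<lambda>\<omega>. p s * X s \<omega>) \<in> borel_measurable (Fs M X I)" if "s \<in> S" for s
    using X_Fs[of s I X M] that S(2) by auto
  then show "A \<in> borel_measurable (Fs M X I)" unfolding S(3) by (intro borel_measurable_sum) auto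
qed

lemma gen_sigma_sets:
  assumes "\<And>s. X s \<in> borel_measurable M" shows "gen_sigma M X I \<subseteq> sets M"
  unfolding gen_sigma_def using assms by (intro sets.sigma_sets_subset) (auto simp: measurable_sets)

lemma alpha_bdd:
  assumes "prob_space M"
  shows "bdd_above {\<bar>measure M U * measure M V - measure M (U \<inter> V)\<bar> | U V.
      U \<in> gen_sigma M X {..0} \<and> V \<in> gen_sigma M X {t..}}"
proof -
  interpret prob_space M by fact
  have "\<bar>prob U * prob V - prob (U \<inter> V)\<bar> \<le> 1" for U V
  proof -
    have a: "0 \<le> prob U * prob V" by simp
    have b: "prob U * prob V \<le> 1" by (auto intro: mult_le_one)
    have c: "prob (U \<inter> V) \<le> 1" "0 \<le> prob (U \<inter> V)" by auto
    show ?thesis using a b c unfolding abs_le_iff by linarith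
  qed
  then show ?thesis unfolding bdd_above_def by blast
qed

lemma alpha_upper:
  assumes "prob_space M" "U \<in> gen_sigma M X {..0}" "V \<in> gen_sigma M X {t..}"
  shows "\<bar>measure M U * measure M V - measure M (U \<inter> V)\<bar> \<le> alpha_coeff M X t"
  unfolding alpha_coeff_def by (rule cSup_upper[OF _ alpha_bdd[OF assms(1)]]) (use assms in blast)

lemma alpha_nonneg:
  assumes "prob_space M" shows "0 \<le> alpha_coeff M X t"
proof -
  have "{} \<in> gen_sigma M X {..0}" "{} \<in> gen_sigma M X {t..}"
    unfolding gen_sigma_def by (auto intro: sigma_sets.Empty)
  from alpha_upper[OF assms this] show ?thesis by simp
qed

lemma (in prob_space) exp_abs_le:
  fixes h :: "'a \<Rightarrow> real"
  assumes "integrable M h" "\<And>\<omega>. \<omega> \<in> space M \<Longrightarrow> \<bar>h \<omega>\<bar> \<le> c"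
  shows "\<bar>expectation h\<bar> \<le> c"
proof -
  have "\<bar>expectation h\<bar> \<le> expectation (\<lambda>\<omega>. \<bar>h \<omega>\<bar>)"
    using integral_norm_bound[of M h] by simp
  also have "\<dots> \<le> expectation (\<lambda>_. c)"
    by (rule integral_mono) (use assms in auto)
  finally show ?thesis by (simp add: prob_space)
qed

lemma layer:
  fixes y :: real and n :: nat
  assumes "0 \<le> y" "y \<le> 1" "n > 0"
  shows "\<bar>y - (\<Sum>k\<in>{1..n}. of_bool (real k / real n \<le> y)) / real n\<bar> \<le> 1 / real n"
proof -
  define m where "m = nat \<lfloor>real n * y\<rfloor>"
  have ny: "0 \<le> real n * y" "real n * y \<le> real n" using assms by (auto simp: mult_left_le)
  have f0: "0 \<le> \<lfloor>real n * y\<rfloor>" using ny by simp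
  have rm: "real m = real_of_int \<lfloor>real n * y\<rfloor>" unfolding m_def using f0 by simp
  have fl: "real m \<le> real n * y" "real n * y < real m + 1"
    unfolding rm by (rule of_int_floor_le) (rule real_of_int_floor_add_one_gt)
  have mn: "m \<le> n" using fl ny by linarith
  have eq: "{1..n} \<inter> {k. real k / real n \<le> y} = {1..m}"
  proof -
    have iff: "real k / real n \<le> y \<longleftrightarrow> k \<le> m" for k
    proof -
      have "real k / real n \<le> y \<longleftrightarrow> real k \<le> y * real n"
        using assms(3) by (simp add: divide_le_eq)
      also have "\<dots> \<longleftrightarrow> int k \<le> \<lfloor>real n * y\<rfloor>" by (simp add: le_floor_iff mult.commute)
      also have "\<dots> \<longleftrightarrow> k \<le> m" unfolding m_def using f0 by (simp add: le_nat_iff)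
      finally show ?thesis .
    qed
    show ?thesis
    proof (intro set_eqI iffI)
      fix k assume "k \<in> {1..n} \<inter> {k. real k / real n \<le> y}"
      then show "k \<in> {1..m}" using iff[of k] by simp
    next
      fix k assume "k \<in> {1..m}"
      then show "k \<in> {1..n} \<inter> {k. real k / real n \<le> y}" using iff[of k] mn by simp
    qed
  qed
  have "(\<Sum>k\<in>{1..n}. of_bool (real k / real n \<le> y)) = (real m :: real)"
    using sum_of_bool_eq[of "{1..n}" "\<lambda>k. real k / real n \<le> y", where 'a=real] eq by simp
  moreover have "\<bar>y - real m / real n\<bar> \<le> 1 / real n"
  proof -
    have a: "real m / real n \<le> y" using fl(1) assms(3) by (simp add: divide_le_eq mult.commute)
    have "y * real n < real m + 1" using fl(2) by (simp add: mult.commute)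
    then have "y < (real m + 1) / real n" using assms(3) by (simp add: less_divide_eq)
    then have b: "y - real m / real n \<le> 1 / real n" by (simp add: add_divide_distrib)
    show ?thesis using a b by linarith
  qed
  ultimately show ?thesis by simp
qed

lemma prod_approx:
  fixes a a' b b' e :: real
  assumes "\<bar>a - a'\<bar> \<le> e" "\<bar>b - b'\<bar> \<le> e" "\<bar>b\<bar> \<le> 1" "\<bar>a'\<bar> \<le> 1"
  shows "\<bar>a * b - a' * b'\<bar> \<le> 2 * e"
proof -
  have "a * b - a' * b' = (a - a') * b + a' * (b - b')" by algebra
  moreover have "\<bar>(a - a') * b\<bar> \<le> e"
    using assms(1,3) by (simp add: abs_mult) (metis abs_ge_zero mult_le_one mult.commute order_trans mult_right_mono mult_left_le)
  moreover have "\<bar>a' * (b - b')\<bar> \<le> e"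
    using assms(2,4) by (simp add: abs_mult) (metis abs_ge_zero mult_right_mono mult_1 order_trans)
  ultimately show ?thesis by linarith
qed

lemma cov01:
  assumes P: "prob_space M" and Xm: "\<And>s. X s \<in> borel_measurable M"
    and f: "f \<in> borel_measurable (Fs M X {..0})" and g: "g \<in> borel_measurable (Fs M X {t..})"
    and f01: "\<And>\<omega>. \<omega> \<in> space M \<Longrightarrow> 0 \<le> f \<omega> \<and> f \<omega> \<le> 1"
    and g01: "\<And>\<omega>. \<omega> \<in> space M \<Longrightarrow> 0 \<le> g \<omega> \<and> g \<omega> \<le> 1"
  shows "\<bar>prob_space.expectation M (\<lambda>\<omega>. f \<omega> * g \<omega>) - prob_space.expectation M f * prob_space.expectation M g\<bar>
           \<le> alpha_coeff M X t"
proof -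
  interpret prob_space M by fact
  have GS: "gen_sigma M X I \<subseteq> sets M" for I by (rule gen_sigma_sets) (rule Xm)
  have sub: "subalgebra M (Fs M X I)" for I
    unfolding subalgebra_def using GS by (simp add: sets_Fs space_Fs)
  have fM[measurable]: "f \<in> borel_measurable M" using measurable_from_subalg[OF sub f] .
  have gM[measurable]: "g \<in> borel_measurable M" using measurable_from_subalg[OF sub g] .
  have fi: "integrable M f" by (rule integrable_const_bound[where B=1]) (use f01 in auto)
  have gi: "integrable M g" by (rule integrable_const_bound[where B=1]) (use g01 in auto)
  have fgi: "integrable M (\<lambda>\<omega>. f \<omega> * g \<omega>)"
    by (rule integrable_const_bound[where B=1]) (use f01 g01 in \<open>auto intro!: mult_le_one simp: abs_mult\<close>)
  have Ef: "\<bar>expectation f\<bar> \<le> 1" by (rule exp_abs_le[OF fi]) (use f01 in auto)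
  have Eg: "\<bar>expectation g\<bar> \<le> 1" by (rule exp_abs_le[OF gi]) (use g01 in auto)
  have ii[intro]: "integrable M (indicator A :: _ \<Rightarrow> real)" if "A \<in> sets M" for A
    using that by (simp add: integrable_indicator_iff sets.Int_space_eq2 less_top[symmetric])
  let ?al = "alpha_coeff M X t"
  let ?C = "expectation (\<lambda>\<omega>. f \<omega> * g \<omega>) - expectation f * expectation g"
  have main: "\<bar>?C\<bar> \<le> ?al + 4 / real n" if n: "n > 0" for n :: nat
  proof -
    define U where "U k = f -` {real k / real n..} \<inter> space M" for k :: nat
    define V where "V k = g -` {real k / real n..} \<inter> space M" for k :: nat
    define fn where "fn \<omega> = (\<Sum>k\<in>{1..n}. indicator (U k) \<omega>) / real n" for \<omega>
    define gn where "gn \<omega> = (\<Sum>k\<in>{1..n}. indicator (V k) \<omega>) / real n" for \<omega>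
    have UF: "U k \<in> gen_sigma M X {..0}" for k
      using measurable_sets[OF f, of "{real k / real n..}"] unfolding U_def sets_Fs space_Fs by simp
    have VF: "V k \<in> gen_sigma M X {t..}" for k
      using measurable_sets[OF g, of "{real k / real n..}"] unfolding V_def sets_Fs space_Fs by simp
    have UM[measurable]: "U k \<in> sets M" for k using UF GS by blast
    have VM[measurable]: "V k \<in> sets M" for k using VF GS by blast
    have fn_eq: "fn \<omega> = (\<Sum>k\<in>{1..n}. of_bool (real k / real n \<le> f \<omega>)) / real n" if "\<omega> \<in> space M" for \<omega>
      unfolding fn_def U_def using that by (simp add: indicator_def)
    have gn_eq: "gn \<omega> = (\<Sum>k\<in>{1..n}. of_bool (real k / real n \<le> g \<omega>)) / real n" if "\<omega> \<in> space M" for \<omega>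
      unfolding gn_def V_def using that by (simp add: indicator_def)
    have fa: "\<bar>f \<omega> - fn \<omega>\<bar> \<le> 1 / real n" if "\<omega> \<in> space M" for \<omega>
      using layer[of "f \<omega>" n] f01[OF that] n fn_eq[OF that] by simp
    have ga: "\<bar>g \<omega> - gn \<omega>\<bar> \<le> 1 / real n" if "\<omega> \<in> space M" for \<omega>
      using layer[of "g \<omega>" n] g01[OF that] n gn_eq[OF that] by simp
    have fn01: "\<bar>fn \<omega>\<bar> \<le> 1" for \<omega>
    proof -
      have "0 \<le> (\<Sum>k\<in>{1..n}. indicator (U k) \<omega> :: real)" by (simp add: sum_nonneg)
      moreover have "(\<Sum>k\<in>{1..n}. indicator (U k) \<omega> :: real) \<le> of_nat (card {1..n}) * 1"
        by (rule sum_bounded_above) (simp add: indicator_def)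
      ultimately show ?thesis unfolding fn_def using n by (simp add: divide_le_eq)
    qed
    have gn01: "\<bar>gn \<omega>\<bar> \<le> 1" for \<omega>
    proof -
      have "0 \<le> (\<Sum>k\<in>{1..n}. indicator (V k) \<omega> :: real)" by (simp add: sum_nonneg)
      moreover have "(\<Sum>k\<in>{1..n}. indicator (V k) \<omega> :: real) \<le> of_nat (card {1..n}) * 1"
        by (rule sum_bounded_above) (simp add: indicator_def)
      ultimately show ?thesis unfolding gn_def using n by (simp add: divide_le_eq)
    qed
    have fnM[measurable]: "fn \<in> borel_measurable M" unfolding fn_def by measurable
    have gnM[measurable]: "gn \<in> borel_measurable M" unfolding gn_def by measurable
    have fni: "integrable M fn" by (rule integrable_const_bound[where B=1]) (use fn01 in auto)
    have gni: "integrable M gn" by (rule integrable_const_bound[where B=1]) (use gn01 in auto)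
    have fgni: "integrable M (\<lambda>\<omega>. fn \<omega> * gn \<omega>)"
      by (rule integrable_const_bound[where B=1]) (use fn01 gn01 in \<open>auto intro!: mult_le_one simp: abs_mult\<close>)
    have Efn: "expectation fn = (\<Sum>k\<in>{1..n}. prob (U k)) / real n"
    proof -
      have "expectation fn = expectation (\<lambda>\<omega>. \<Sum>k\<in>{1..n}. indicator (U k) \<omega>) / real n"
        unfolding fn_def by simp
      also have "expectation (\<lambda>\<omega>. \<Sum>k\<in>{1..n}. indicator (U k) \<omega>) = (\<Sum>k\<in>{1..n}. expectation (indicator (U k)) :: real)"
        by (rule Bochner_Integration.integral_sum[where f="\<lambda>k. indicator (U k)"]) (simp add: integrable_indicator_iff sets.Int_space_eq2 less_top[symmetric] UM)
      also have "\<dots> = (\<Sum>k\<in>{1..n}. prob (U k))"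
        by (intro sum.cong refl) (simp add: Int_absorb2 sets.sets_into_space)
      finally show ?thesis .
    qed
    have Egn: "expectation gn = (\<Sum>k\<in>{1..n}. prob (V k)) / real n"
    proof -
      have "expectation gn = expectation (\<lambda>\<omega>. \<Sum>k\<in>{1..n}. indicator (V k) \<omega>) / real n"
        unfolding gn_def by simp
      also have "expectation (\<lambda>\<omega>. \<Sum>k\<in>{1..n}. indicator (V k) \<omega>) = (\<Sum>k\<in>{1..n}. expectation (indicator (V k)) :: real)"
        by (rule Bochner_Integration.integral_sum[where f="\<lambda>k. indicator (V k)"]) (simp add: integrable_indicator_iff sets.Int_space_eq2 less_top[symmetric] VM)
      also have "\<dots> = (\<Sum>k\<in>{1..n}. prob (V k))"
        by (intro sum.cong refl) (simp add: Int_absorb2 sets.sets_into_space)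
      finally show ?thesis .
    qed
    have Efgn: "expectation (\<lambda>\<omega>. fn \<omega> * gn \<omega>) = (\<Sum>k\<in>{1..n}. \<Sum>l\<in>{1..n}. prob (U k \<inter> V l)) / (real n * real n)"
    proof -
      have eq: "fn \<omega> * gn \<omega> = (\<Sum>k\<in>{1..n}. \<Sum>l\<in>{1..n}. indicator (U k \<inter> V l) \<omega>) / (real n * real n)" for \<omega>
        unfolding fn_def gn_def by (simp add: sum_product indicator_inter_arith)
      have "expectation (\<lambda>\<omega>. fn \<omega> * gn \<omega>) = expectation (\<lambda>\<omega>. \<Sum>k\<in>{1..n}. \<Sum>l\<in>{1..n}. indicator (U k \<inter> V l) \<omega>) / (real n * real n)"
        unfolding eq by simp
      also have "expectation (\<lambda>\<omega>. \<Sum>k\<in>{1..n}. \<Sum>l\<in>{1..n}. indicator (U k \<inter> V l) \<omega>) = (\<Sum>k\<in>{1..n}. \<Sum>l\<in>{1..n}. expectation (indicator (U k \<inter> V l)) :: real)"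
        by (subst Bochner_Integration.integral_sum, force, intro sum.cong refl, subst Bochner_Integration.integral_sum) (auto intro!: ii UM VM sets.Int)
      also have "\<dots> = (\<Sum>k\<in>{1..n}. \<Sum>l\<in>{1..n}. prob (U k \<inter> V l))"
        by (intro sum.cong refl) (simp add: Int_absorb2 sets.sets_into_space)
      finally show ?thesis .
    qed
    have Cn: "\<bar>expectation (\<lambda>\<omega>. fn \<omega> * gn \<omega>) - expectation fn * expectation gn\<bar> \<le> ?al"
    proof -
      have "expectation (\<lambda>\<omega>. fn \<omega> * gn \<omega>) - expectation fn * expectation gn
          = (\<Sum>k\<in>{1..n}. \<Sum>l\<in>{1..n}. prob (U k \<inter> V l) - prob (U k) * prob (V l)) / (real n * real n)"
        unfolding Efgn Efn Egn by (simp add: sum_product sum_subtractf diff_divide_distrib)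
      also have "\<bar>\<dots>\<bar> \<le> (\<Sum>k\<in>{1..n}. \<Sum>l\<in>{1..n}. ?al) / (real n * real n)"
      proof -
        have "\<bar>\<Sum>k\<in>{1..n}. \<Sum>l\<in>{1..n}. prob (U k \<inter> V l) - prob (U k) * prob (V l)\<bar>
            \<le> (\<Sum>k\<in>{1..n}. \<Sum>l\<in>{1..n}. ?al)"
        proof -
          have b: "\<bar>prob (U k \<inter> V l) - prob (U k) * prob (V l)\<bar> \<le> ?al" for k l
            using alpha_upper[OF P UF VF, of k l] by (simp add: abs_minus_commute)
          have "\<bar>\<Sum>k\<in>{1..n}. \<Sum>l\<in>{1..n}. prob (U k \<inter> V l) - prob (U k) * prob (V l)\<bar>
              \<le> (\<Sum>k\<in>{1..n}. \<bar>\<Sum>l\<in>{1..n}. prob (U k \<inter> V l) - prob (U k) * prob (V l)\<bar>)"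
            by (rule sum_abs)
          also have "\<dots> \<le> (\<Sum>k\<in>{1..n}. \<Sum>l\<in>{1..n}. \<bar>prob (U k \<inter> V l) - prob (U k) * prob (V l)\<bar>)"
            by (intro sum_mono sum_abs)
          also have "\<dots> \<le> (\<Sum>k\<in>{1..n}. \<Sum>l\<in>{1..n}. ?al)"
            by (intro sum_mono b)
          finally show ?thesis .
        qed
        then have "\<bar>\<Sum>k\<in>{1..n}. \<Sum>l\<in>{1..n}. prob (U k \<inter> V l) - prob (U k) * prob (V l)\<bar> / (real n * real n)
            \<le> (\<Sum>k\<in>{1..n}. \<Sum>l\<in>{1..n}. ?al) / (real n * real n)"
          by (rule divide_right_mono) simp
        moreover have "\<bar>(\<Sum>k\<in>{1..n}. \<Sum>l\<in>{1..n}. prob (U k \<inter> V l) - prob (U k) * prob (V l)) / (real n * real n)\<bar>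
           = \<bar>\<Sum>k\<in>{1..n}. \<Sum>l\<in>{1..n}. prob (U k \<inter> V l) - prob (U k) * prob (V l)\<bar> / (real n * real n)"
          by (simp add: abs_divide)
        ultimately show ?thesis by simp
      qed
      also have "\<dots> = ?al" using n by simp
      finally show ?thesis .
    qed
    have d1: "\<bar>expectation (\<lambda>\<omega>. f \<omega> * g \<omega>) - expectation (\<lambda>\<omega>. fn \<omega> * gn \<omega>)\<bar> \<le> 2 * (1 / real n)"
    proof -
      have "expectation (\<lambda>\<omega>. f \<omega> * g \<omega>) - expectation (\<lambda>\<omega>. fn \<omega> * gn \<omega>)
          = expectation (\<lambda>\<omega>. f \<omega> * g \<omega> - fn \<omega> * gn \<omega>)"
        using fgi fgni by simp
      also have "\<bar>\<dots>\<bar> \<le> 2 * (1 / real n)"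
      proof (rule exp_abs_le)
        show "integrable M (\<lambda>\<omega>. f \<omega> * g \<omega> - fn \<omega> * gn \<omega>)" using fgi fgni by simp
        fix \<omega> assume that: "\<omega> \<in> space M"
        have "\<bar>g \<omega>\<bar> \<le> 1" using g01[OF that] by simp
        then show "\<bar>f \<omega> * g \<omega> - fn \<omega> * gn \<omega>\<bar> \<le> 2 * (1 / real n)"
          using prod_approx[OF fa[OF that] ga[OF that] _ fn01[of \<omega>]] by simp
      qed
      finally show ?thesis .
    qed
    have d2: "\<bar>expectation f * expectation g - expectation fn * expectation gn\<bar> \<le> 2 * (1 / real n)"
    proof (rule prod_approx)
      show "\<bar>expectation f - expectation fn\<bar> \<le> 1 / real n"
        using exp_abs_le[of "\<lambda>\<omega>. f \<omega> - fn \<omega>" "1 / real n"] fi fni fa by simp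
      show "\<bar>expectation g - expectation gn\<bar> \<le> 1 / real n"
        using exp_abs_le[of "\<lambda>\<omega>. g \<omega> - gn \<omega>" "1 / real n"] gi gni ga by simp
      show "\<bar>expectation g\<bar> \<le> 1" by (rule Eg)
      show "\<bar>expectation fn\<bar> \<le> 1" by (rule exp_abs_le[OF fni]) (use fn01 in auto)
    qed
    show ?thesis using Cn d1 d2 by linarith
  qed
  show ?thesis
  proof (rule ccontr)
    assume "\<not> \<bar>?C\<bar> \<le> ?al"
    then have pos: "\<bar>?C\<bar> - ?al > 0" by simp
    obtain n :: nat where nn: "4 / (\<bar>?C\<bar> - ?al) < real n" using reals_Archimedean2 by blast
    have n0: "n > 0" using nn pos by (metis divide_pos_pos of_nat_0_less_iff order_less_trans zero_less_numeral)
    have "4 < real n * (\<bar>?C\<bar> - ?al)" using nn pos by (simp add: divide_less_eq mult.commute)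
    then have "4 / real n < \<bar>?C\<bar> - ?al" using n0 by (simp add: divide_less_eq mult.commute)
    with main[OF n0] show False by linarith
  qed
qed

lemma cosh_ineq: "(exp x + exp (-x)) / 2 - 1 \<ge> x\<^sup>2 / 4" for x :: real
proof -
  have *: "(exp y + exp (-y)) / 2 - 1 \<ge> y\<^sup>2 / 4" if "y \<ge> 0" for y :: real
  proof -
    have "1 + y + y\<^sup>2 / 2 \<le> exp y" by (rule exp_lower_Taylor_quadratic) fact
    moreover have "1 + (-y) \<le> exp (-y)" by (rule exp_ge_add_one_self)
    ultimately show ?thesis by (simp add: field_simps)
  qed
  show ?thesis
  proof (cases "x \<ge> 0")
    case True then show ?thesis by (rule *)
  next
    case False then have "(exp (-x) + exp (-(-x))) / 2 - 1 \<ge> (-x)\<^sup>2 / 4" by (intro *) simp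
    then show ?thesis by (simp add: add.commute)
  qed
qed

context prob_space
begin

lemma pair_facts:
  assumes gp: "centered_gaussian_process M X" and A: "inlc X UNIV A" and B: "inlc X UNIV B"
  shows "integrable M (\<lambda>\<omega>. (A \<omega>)\<^sup>2)" "integrable M (\<lambda>\<omega>. (B \<omega>)\<^sup>2)" "integrable M (\<lambda>\<omega>. A \<omega> * B \<omega>)"
    and "expectation (\<lambda>\<omega>. (u * A \<omega> + v * B \<omega>)\<^sup>2) =
          u\<^sup>2 * expectation (\<lambda>\<omega>. (A \<omega>)\<^sup>2) + 2 * u * v * expectation (\<lambda>\<omega>. A \<omega> * B \<omega>)
          + v\<^sup>2 * expectation (\<lambda>\<omega>. (B \<omega>)\<^sup>2)"
    and "expectation (\<lambda>\<omega>. cos (u * A \<omega> + v * B \<omega>)) = exp (- expectation (\<lambda>\<omega>. (u * A \<omega> + v * B \<omega>)\<^sup>2) / 2)"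
proof -
  have G: "centered_gaussian_rv M Y" if "inlc X UNIV Y" for Y using inlc_gauss[OF that gp] .
  show iA: "integrable M (\<lambda>\<omega>. (A \<omega>)\<^sup>2)" using gauss_cos[OF G[OF A]] by simp
  show iB: "integrable M (\<lambda>\<omega>. (B \<omega>)\<^sup>2)" using gauss_cos[OF G[OF B]] by simp
  have AB: "inlc X UNIV (\<lambda>\<omega>. A \<omega> + B \<omega>)" by (rule inlc_add[OF A B])
  have iAB2: "integrable M (\<lambda>\<omega>. (A \<omega> + B \<omega>)\<^sup>2)" using gauss_cos[OF G[OF AB]] by simp
  have eq: "(\<lambda>\<omega>. A \<omega> * B \<omega>) = (\<lambda>\<omega>. ((A \<omega> + B \<omega>)\<^sup>2 - (A \<omega>)\<^sup>2 - (B \<omega>)\<^sup>2) / 2)"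
    by (auto simp: power2_eq_square algebra_simps)
  show iAB: "integrable M (\<lambda>\<omega>. A \<omega> * B \<omega>)" unfolding eq using iA iB iAB2 by simp
  have eq2: "(\<lambda>\<omega>. (u * A \<omega> + v * B \<omega>)\<^sup>2) =
      (\<lambda>\<omega>. u\<^sup>2 * (A \<omega>)\<^sup>2 + 2 * u * v * (A \<omega> * B \<omega>) + v\<^sup>2 * (B \<omega>)\<^sup>2)"
    by (auto simp: power2_eq_square algebra_simps)
  show "expectation (\<lambda>\<omega>. (u * A \<omega> + v * B \<omega>)\<^sup>2) =
          u\<^sup>2 * expectation (\<lambda>\<omega>. (A \<omega>)\<^sup>2) + 2 * u * v * expectation (\<lambda>\<omega>. A \<omega> * B \<omega>)
          + v\<^sup>2 * expectation (\<lambda>\<omega>. (B \<omega>)\<^sup>2)"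
    unfolding eq2 using iA iB iAB by simp
  have "inlc X UNIV (\<lambda>\<omega>. u * A \<omega> + v * B \<omega>)" by (intro inlc_add inlc_scale A B)
  then show "expectation (\<lambda>\<omega>. cos (u * A \<omega> + v * B \<omega>)) = exp (- expectation (\<lambda>\<omega>. (u * A \<omega> + v * B \<omega>)\<^sup>2) / 2)"
    using gauss_cos[OF G] by blast
qed

lemma cauchy_schwarz_lc:
  assumes gp: "centered_gaussian_process M X" and A: "inlc X UNIV A" and B: "inlc X UNIV B"
  shows "(expectation (\<lambda>\<omega>. A \<omega> * B \<omega>))\<^sup>2 \<le> expectation (\<lambda>\<omega>. (A \<omega>)\<^sup>2) * expectation (\<lambda>\<omega>. (B \<omega>)\<^sup>2)"
proof -
  define a where "a = expectation (\<lambda>\<omega>. (A \<omega>)\<^sup>2)"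
  define b where "b = expectation (\<lambda>\<omega>. (B \<omega>)\<^sup>2)"
  define c where "c = expectation (\<lambda>\<omega>. A \<omega> * B \<omega>)"
  have Q: "0 \<le> u\<^sup>2 * a + 2 * u * v * c + v\<^sup>2 * b" for u v
  proof -
    have "0 \<le> expectation (\<lambda>\<omega>. (u * A \<omega> + v * B \<omega>)\<^sup>2)" by (rule Bochner_Integration.integral_nonneg) auto
    then show ?thesis using pair_facts(4)[OF gp A B, of u v] unfolding a_def b_def c_def by simp
  qed
  have a0: "0 \<le> a" using Q[of 1 0] by simp
  show ?thesis unfolding a_def[symmetric] b_def[symmetric] c_def[symmetric]
  proof (cases "a = 0")
    case True
    have "c = 0"
    proof (rule ccontr)
      assume "c \<noteq> 0"
      have "0 \<le> 2 * (- (b + 1) / (2 * c)) * 1 * c + 1\<^sup>2 * b" using Q[of "- (b + 1) / (2 * c)" 1] True by simp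
      also have "\<dots> = -1" using \<open>c \<noteq> 0\<close> by (simp add: field_simps)
      finally show False by simp
    qed
    then show "c\<^sup>2 \<le> a * b" using True by simp
  next
    case False
    then have ap: "a > 0" using a0 by simp
    have "0 \<le> (- c / a)\<^sup>2 * a + 2 * (- c / a) * 1 * c + 1\<^sup>2 * b" by (rule Q)
    also have "\<dots> = b - c\<^sup>2 / a" using ap by (simp add: field_simps power2_eq_square)
    finally have "c\<^sup>2 / a \<le> b" by simp
    then show "c\<^sup>2 \<le> a * b" using ap by (simp add: divide_le_eq mult.commute)
  qed
qed

lemma cov_cos:
  assumes Xm: "\<And>s. X s \<in> borel_measurable M"
    and A: "A \<in> borel_measurable (Fs M X {..0})" and B: "B \<in> borel_measurable (Fs M X {t..})"
  shows "\<bar>expectation (\<lambda>\<omega>. cos (A \<omega>) * cos (B \<omega>)) - expectation (\<lambda>\<omega>. cos (A \<omega>)) * expectation (\<lambda>\<omega>. cos (B \<omega>))\<bar>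
           \<le> 4 * alpha_coeff M X t"
proof -
  have GS: "gen_sigma M X I \<subseteq> sets M" for I by (rule gen_sigma_sets) (rule Xm)
  have sub: "subalgebra M (Fs M X I)" for I
    unfolding subalgebra_def using GS by (simp add: sets_Fs space_Fs)
  have AM[measurable]: "A \<in> borel_measurable M" using measurable_from_subalg[OF sub A] .
  have BM[measurable]: "B \<in> borel_measurable M" using measurable_from_subalg[OF sub B] .
  define f where "f \<omega> = (1 + cos (A \<omega>)) / 2" for \<omega>
  define g where "g \<omega> = (1 + cos (B \<omega>)) / 2" for \<omega>
  have fF: "f \<in> borel_measurable (Fs M X {..0})" unfolding f_def using A by measurable
  have gF: "g \<in> borel_measurable (Fs M X {t..})" unfolding g_def using B by measurable
  have c: "cov = 4 * (expectation (\<lambda>\<omega>. f \<omega> * g \<omega>) - expectation f * expectation g)"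
    if "cov = expectation (\<lambda>\<omega>. cos (A \<omega>) * cos (B \<omega>)) - expectation (\<lambda>\<omega>. cos (A \<omega>)) * expectation (\<lambda>\<omega>. cos (B \<omega>))"
    for cov
  proof -
    have i1: "integrable M (\<lambda>\<omega>. cos (A \<omega>))" by (rule integrable_const_bound[where B=1]) auto
    have i2: "integrable M (\<lambda>\<omega>. cos (B \<omega>))" by (rule integrable_const_bound[where B=1]) auto
    have i3: "integrable M (\<lambda>\<omega>. cos (A \<omega>) * cos (B \<omega>))"
      by (rule integrable_const_bound[where B=1]) (auto simp: abs_mult intro!: mult_le_one)
    have e: "(\<lambda>\<omega>. f \<omega> * g \<omega>) = (\<lambda>\<omega>. (1 + cos (A \<omega>) + cos (B \<omega>) + cos (A \<omega>) * cos (B \<omega>)) / 4)"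
      unfolding f_def g_def by (auto simp: field_simps)
    show ?thesis unfolding that e unfolding f_def g_def using i1 i2 i3
      by (simp add: prob_space field_simps)
  qed
  have "\<bar>expectation (\<lambda>\<omega>. f \<omega> * g \<omega>) - expectation f * expectation g\<bar> \<le> alpha_coeff M X t"
    by (rule cov01[OF prob_space_axioms Xm fF gF]) (auto simp: f_def g_def, (smt (verit) cos_ge_minus_one)+)
  then show ?thesis using c[OF refl] by simp
qed

end

context prob_space
begin

lemma key:
  assumes gp: "centered_gaussian_process M X"
    and A: "inlc X {..0} A" and B: "inlc X {t..} B"
  shows "(expectation (\<lambda>\<omega>. A \<omega> * B \<omega>))\<^sup>2
     \<le> 16 * exp 1 * alpha_coeff M X t * (max (expectation (\<lambda>\<omega>. (A \<omega>)\<^sup>2)) (expectation (\<lambda>\<omega>. (B \<omega>)\<^sup>2)))\<^sup>2"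
proof -
  have Xm: "X s \<in> borel_measurable M" for s using gp unfolding centered_gaussian_process_def by auto
  have A': "inlc X UNIV A" using inlc_mono[OF A] by simp
  have B': "inlc X UNIV B" using inlc_mono[OF B] by simp
  define a where "a = expectation (\<lambda>\<omega>. (A \<omega>)\<^sup>2)"
  define b where "b = expectation (\<lambda>\<omega>. (B \<omega>)\<^sup>2)"
  define c where "c = expectation (\<lambda>\<omega>. A \<omega> * B \<omega>)"
  define m where "m = max a b"
  have a0: "0 \<le> a" unfolding a_def by (rule Bochner_Integration.integral_nonneg) auto
  have b0: "0 \<le> b" unfolding b_def by (rule Bochner_Integration.integral_nonneg) auto
  have al0: "0 \<le> alpha_coeff M X t" by (rule alpha_nonneg[OF prob_space_axioms])
  have cs: "c\<^sup>2 \<le> a * b" unfolding a_def b_def c_def by (rule cauchy_schwarz_lc[OF gp A' B'])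
  have Q: "expectation (\<lambda>\<omega>. (u * A \<omega> + v * B \<omega>)\<^sup>2) = u\<^sup>2 * a + 2 * u * v * c + v\<^sup>2 * b" for u v
    unfolding a_def b_def c_def by (rule pair_facts(4)[OF gp A' B'])
  have C: "expectation (\<lambda>\<omega>. cos (u * A \<omega> + v * B \<omega>)) = exp (- (u\<^sup>2 * a + 2 * u * v * c + v\<^sup>2 * b) / 2)" for u v
    using pair_facts(5)[OF gp A' B', of u v] Q[of u v] by simp
  have main: "c\<^sup>2 \<le> 16 * exp 1 * alpha_coeff M X t * m\<^sup>2"
  proof (cases "m = 0")
    case True
    then have "a = 0" "b = 0" using a0 b0 unfolding m_def by (auto simp: max_def split: if_splits)
    then have "c = 0" using cs by simp
    then show ?thesis using al0 by simp
  next
    case False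
    then have mp: "m > 0" using a0 b0 unfolding m_def by (auto simp: max_def)
    define u where "u = 1 / sqrt m"
    have u2: "u\<^sup>2 = 1 / m" unfolding u_def using mp by (simp add: power_divide)
    define x where "x = u\<^sup>2 * c"
    define s where "s = (u\<^sup>2 * a + u\<^sup>2 * b) / 2"
    have s1: "s \<le> 1"
    proof -
      have "u\<^sup>2 * a \<le> 1" "u\<^sup>2 * b \<le> 1" unfolding u2 using mp unfolding m_def by (auto simp: field_simps)
      then show ?thesis unfolding s_def by simp
    qed
    have cA: "expectation (\<lambda>\<omega>. cos (u * A \<omega>)) = exp (- (u\<^sup>2 * a) / 2)" using C[of u 0] by simp
    have cB: "expectation (\<lambda>\<omega>. cos (u * B \<omega>)) = exp (- (u\<^sup>2 * b) / 2)" using C[of 0 u] by simp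
    have AMm[measurable]: "A \<in> borel_measurable M" using inlc_gauss[OF A' gp] unfolding centered_gaussian_rv_def by simp
    have BMm[measurable]: "B \<in> borel_measurable M" using inlc_gauss[OF B' gp] unfolding centered_gaussian_rv_def by simp
    have cAB: "expectation (\<lambda>\<omega>. cos (u * A \<omega>) * cos (u * B \<omega>)) = exp (- s) * ((exp x + exp (-x)) / 2)"
    proof -
      have e: "(\<lambda>\<omega>. cos (u * A \<omega>) * cos (u * B \<omega>)) = (\<lambda>\<omega>. (cos (u * A \<omega> + u * B \<omega>) + cos (u * A \<omega> + (-u) * B \<omega>)) / 2)"
        by (auto simp: cos_add cos_diff)
      have i1: "integrable M (\<lambda>\<omega>. cos (u * A \<omega> + u * B \<omega>))" by (rule integrable_const_bound[where B=1]) auto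
      have i2: "integrable M (\<lambda>\<omega>. cos (u * A \<omega> + (-u) * B \<omega>))" by (rule integrable_const_bound[where B=1]) auto
      have "expectation (\<lambda>\<omega>. cos (u * A \<omega>) * cos (u * B \<omega>)) =
         (expectation (\<lambda>\<omega>. cos (u * A \<omega> + u * B \<omega>)) + expectation (\<lambda>\<omega>. cos (u * A \<omega> + (-u) * B \<omega>))) / 2"
        unfolding e using i1 i2 by simp
      also have "\<dots> = (exp (- (u\<^sup>2 * a + 2 * u * u * c + u\<^sup>2 * b) / 2) + exp (- (u\<^sup>2 * a + 2 * u * (-u) * c + (-u)\<^sup>2 * b) / 2)) / 2"
        unfolding C by simp
      also have "- (u\<^sup>2 * a + 2 * u * u * c + u\<^sup>2 * b) / 2 = -s + -x"
        unfolding s_def x_def by (simp add: power2_eq_square field_simps)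
      also have "- (u\<^sup>2 * a + 2 * u * (-u) * c + (-u)\<^sup>2 * b) / 2 = -s + x"
        unfolding s_def x_def by (simp add: power2_eq_square field_simps)
      also have "(exp (-s + -x) + exp (-s + x)) / 2 = exp (- s) * ((exp x + exp (-x)) / 2)"
        by (simp add: exp_add[symmetric] algebra_simps add_divide_distrib)
      finally show ?thesis .
    qed
    have cab: "exp (-(u\<^sup>2 * a) / 2) * exp (- (u\<^sup>2 * b) / 2) = exp (-s)"
      unfolding s_def by (simp add: exp_add[symmetric] field_simps)
    have uA: "(\<lambda>\<omega>. u * A \<omega>) \<in> borel_measurable (Fs M X {..0})" by (rule inlc_meas, rule inlc_scale[OF A])
    have uB: "(\<lambda>\<omega>. u * B \<omega>) \<in> borel_measurable (Fs M X {t..})" by (rule inlc_meas, rule inlc_scale[OF B])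
    have "\<bar>exp (-s) * ((exp x + exp (-x)) / 2) - exp (-s)\<bar> \<le> 4 * alpha_coeff M X t"
      using cov_cos[OF Xm uA uB] unfolding cAB cA cB cab .
    moreover have "exp (-s) * ((exp x + exp (-x)) / 2) - exp (-s) = exp (-s) * ((exp x + exp (-x)) / 2 - 1)"
      by (simp add: algebra_simps)
    ultimately have "exp (-s) * ((exp x + exp (-x)) / 2 - 1) \<le> 4 * alpha_coeff M X t"
      by linarith
    moreover have "exp (-1) * (x\<^sup>2 / 4) \<le> exp (-s) * ((exp x + exp (-x)) / 2 - 1)"
      by (rule mult_mono) (use s1 cosh_ineq[of x] in auto)
    ultimately have "exp (-1) * (x\<^sup>2 / 4) \<le> 4 * alpha_coeff M X t" by linarith
    then have "x\<^sup>2 \<le> 16 * exp 1 * alpha_coeff M X t"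
      by (simp add: exp_minus field_simps)
    moreover have "x\<^sup>2 = c\<^sup>2 / m\<^sup>2" unfolding x_def u2 by (simp add: power_divide)
    ultimately have "c\<^sup>2 / m\<^sup>2 \<le> 16 * exp 1 * alpha_coeff M X t" by simp
    then show ?thesis using mp by (simp add: divide_le_eq)
  qed
  then show ?thesis unfolding a_def b_def c_def m_def .
qed

end

lemma SD:
  fixes r r' r'' :: "real \<Rightarrow> real"
  assumes d1: "\<And>t. (r has_real_derivative r' t) (at t)"
    and d2: "\<And>t. (r' has_real_derivative r'' t) (at t)"
  shows "((\<lambda>h. (r (t + h) + r (t - h) - 2 * r t) / h\<^sup>2) \<longlongrightarrow> r'' t) (at 0)"
proof -
  have D1: "((\<lambda>h. r' (t + h)) has_real_derivative r'' t) (at 0)"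
    using DERIV_shift[of r' "r'' t" 0 t] d2[of t] by (simp add: add.commute)
  have D2: "((\<lambda>h. r' (t - h)) has_real_derivative - r'' t) (at 0)"
    using DERIV_mirror[where f="\<lambda>h. r' (t + h)" and x=0 and y="r'' t"] D1 by simp
  have q: "((\<lambda>h. r' (t + h) - r' (t - h)) has_real_derivative (r'' t - - r'' t)) (at 0)"
    by (rule DERIV_diff[OF D1 D2])
  then have ql: "((\<lambda>h. (r' (t + h) - r' (t - h)) / h) \<longlongrightarrow> 2 * r'' t) (at 0)"
    unfolding DERIV_def by simp
  have lim2: "((\<lambda>h. (r' (t + h) - r' (t - h)) / (2 * h)) \<longlongrightarrow> r'' t) (at 0)"
  proof -
    have "((\<lambda>h. ((r' (t + h) - r' (t - h)) / h) / 2) \<longlongrightarrow> 2 * r'' t / 2) (at 0)"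
      by (intro tendsto_divide ql tendsto_const) simp
    then show ?thesis by (simp add: mult.commute)
  qed
  have cont: "isCont r x" for x using d1[of x] by (rule DERIV_isCont)
  show ?thesis
  proof (rule lhopital)
    have "((\<lambda>h. r (t + h) + r (t - h) - 2 * r t) \<longlongrightarrow> r (t + 0) + r (t - 0) - 2 * r t) (at 0)"
      by (intro tendsto_intros isCont_tendsto_compose[OF cont])
    then show "((\<lambda>h. r (t + h) + r (t - h) - 2 * r t) \<longlongrightarrow> 0) (at 0)" by simp
    show "((\<lambda>h. h\<^sup>2) \<longlongrightarrow> 0) (at (0::real))"
      by (rule tendsto_eq_intros) (auto intro: tendsto_ident_at)
    show "\<forall>\<^sub>F h in at 0. h\<^sup>2 \<noteq> (0::real)" by (auto simp: eventually_at_filter)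
    show "\<forall>\<^sub>F h in at 0. 2 * h \<noteq> (0::real)" by (auto simp: eventually_at_filter)
    show "\<forall>\<^sub>F h in at 0. ((\<lambda>h. r (t + h) + r (t - h) - 2 * r t) has_real_derivative (r' (t + h) - r' (t - h))) (at h)"
    proof (intro always_eventually allI)
      fix h :: real
      have a: "((\<lambda>h. r (t + h)) has_real_derivative r' (t + h)) (at h)"
        using DERIV_shift[of r "r' (t + h)" h t] d1[of "t + h"] by (simp add: add.commute)
      have b: "((\<lambda>h. r (t - h)) has_real_derivative - r' (t - h)) (at h)"
        using DERIV_mirror[where f="\<lambda>y. r (t + y)" and x=h and y="r' (t - h)"] DERIV_shift[of r "r' (t - h)" "-h" t] d1[of "t - h"]
        by (simp add: add.commute)
      show "((\<lambda>h. r (t + h) + r (t - h) - 2 * r t) has_real_derivative (r' (t + h) - r' (t - h))) (at h)"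
        using DERIV_diff[OF DERIV_add[OF a b] DERIV_const[of "2 * r t"]] by simp
    qed
    show "\<forall>\<^sub>F h in at 0. ((\<lambda>h. h\<^sup>2) has_real_derivative 2 * h) (at h)"
      by (intro always_eventually allI) (auto intro!: derivative_eq_intros)
    show "((\<lambda>h. (r' (t + h) - r' (t - h)) / (2 * h)) \<longlongrightarrow> r'' t) (at 0)" by (rule lim2)
  qed
qed

lemma even_int:
  fixes h :: "real \<Rightarrow> real"
  assumes hm: "h \<in> borel_measurable borel" and ev: "\<And>t. h (-t) = h t" and nn: "\<And>t. 0 \<le> h t"
    and si: "set_integrable lborel {0..} h"
  shows "integrable lborel h"
proof -
  have I1: "integrable lborel (\<lambda>x. indicator {0..} x * h x)" using si unfolding set_integrable_def by simp
  have I2: "integrable lborel (\<lambda>x. indicator {0..} (-x) * h (-x))"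
    using lborel_integrable_real_affine_iff[where c="-1" and t=0 and f="\<lambda>x. indicator {0..} x * h x"] I1 by simp
  have hm': "h \<in> borel_measurable lborel" using hm by simp
  show ?thesis
  proof (rule Bochner_Integration.integrable_bound[OF Bochner_Integration.integrable_add[OF I1 I2] hm'], rule AE_I2)
    fix x :: real
    show "norm (h x) \<le> norm (indicator {0..} x * h x + indicator {0..} (-x) * h (-x))"
      using nn[of x] ev[of x] by (cases "x \<ge> 0") (auto simp: indicator_def)
  qed
qed

lemma powr_tail_int:
  fixes a e :: real
  assumes "a > 0" "e < -1"
  shows "integrable lborel (\<lambda>x. indicator {a..} x * x powr e)"
proof -
  have "(\<lambda>x. x powr e) integrable_on {a..}"
    using has_integral_powr_to_inf[OF assms(2,1)] unfolding integrable_on_def by blast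
  then have "(\<lambda>x. x powr e) absolutely_integrable_on {a..}"
    by (rule nonnegative_absolutely_integrable_1) simp
  then have "integrable lebesgue (\<lambda>x. indicator {a..} x *\<^sub>R x powr e)"
    unfolding set_integrable_def .
  then show ?thesis
    by (subst (asm) integrable_completion) (auto intro!: borel_measurable_times borel_measurable_indicator)
qed

lemma deriv_meas:
  fixes f f' :: "real \<Rightarrow> real"
  assumes d: "\<And>t. (f has_real_derivative f' t) (at t)" and fm: "f \<in> borel_measurable borel"
  shows "f' \<in> borel_measurable borel"
proof (rule borel_measurable_LIMSEQ_real)
  fix x :: real
  have lim: "((\<lambda>h. (f (x + h) - f x) / h) \<longlongrightarrow> f' x) (at 0)" using d[of x] unfolding DERIV_def .
  have s: "filterlim (\<lambda>i. 1 / real (Suc i)) (at 0) sequentially"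
  proof -
    have "((\<lambda>i. 1 / real (Suc i)) \<longlongrightarrow> 0) sequentially"
      using LIMSEQ_inverse_real_of_nat by (simp add: inverse_eq_divide)
    then have "filterlim (\<lambda>i. 1 / real (Suc i)) (at_right 0) sequentially"
      by (rule tendsto_imp_filterlim_at_right) simp
    then show ?thesis by (rule filterlim_mono) (simp_all add: at_le)
  qed
  show "(\<lambda>i. (f (x + 1 / real (Suc i)) - f x) / (1 / real (Suc i))) \<longlonglongrightarrow> f' x"
    using filterlim_compose[OF lim s] by simp
next
  fix i :: nat
  show "(\<lambda>x. (f (x + 1 / real (Suc i)) - f x) / (1 / real (Suc i))) \<in> borel_measurable borel"
    using fm by measurable
qed

locale gsetup = prob_space M for M :: "'a measure" +
  fixes X :: "real \<Rightarrow> 'a \<Rightarrow> real" and r r' r'' :: "real \<Rightarrow> real"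
  assumes gp: "centered_gaussian_process M X"
    and cov: "\<And>t \<tau>. expectation (\<lambda>\<omega>. X t \<omega> * X (t + \<tau>) \<omega>) = r \<tau>"
    and d1: "\<And>t. (r has_real_derivative r' t) (at t)"
    and d2: "\<And>t. (r' has_real_derivative r'' t) (at t)"
    and r0: "r 0 = 1" and r''0: "r'' 0 = -1"
begin

lemma EXX: "expectation (\<lambda>\<omega>. X s \<omega> * X u \<omega>) = r (u - s)"
  using cov[of s "u - s"] by simp

lemma ev: "r (-t) = r t"
  using EXX[of t 0] EXX[of 0 t] by (simp add: mult.commute)

lemma iXX: "integrable M (\<lambda>\<omega>. X s \<omega> * X u \<omega>)"
  using pair_facts(3)[OF gp inlc_X inlc_X] by simp

lemma EX2: "expectation (\<lambda>\<omega>. (X s \<omega>)\<^sup>2) = 1"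
  using EXX[of s s] r0 by (simp add: power2_eq_square)

lemma inlc_dq: "p \<in> I \<Longrightarrow> q \<in> I \<Longrightarrow> inlc X I (\<lambda>\<omega>. (X p \<omega> - X q \<omega>) / h)"
proof -
  assume "p \<in> I" "q \<in> I"
  then have "inlc X I (\<lambda>\<omega>. (1 / h) * (X p \<omega> + (-1) * X q \<omega>))"
    by (intro inlc_scale inlc_add inlc_X)
  moreover have "(\<lambda>\<omega>. (1 / h) * (X p \<omega> + (-1) * X q \<omega>)) = (\<lambda>\<omega>. (X p \<omega> - X q \<omega>) / h)"
    by (auto simp: divide_inverse)
  ultimately show ?thesis by simp
qed

lemma E_X_D: "expectation (\<lambda>\<omega>. X a \<omega> * ((X p \<omega> - X q \<omega>) / h)) = (r (p - a) - r (q - a)) / h"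
proof -
  have "(\<lambda>\<omega>. X a \<omega> * ((X p \<omega> - X q \<omega>) / h)) = (\<lambda>\<omega>. (X a \<omega> * X p \<omega> - X a \<omega> * X q \<omega>) / h)"
    by (auto simp: algebra_simps)
  then show ?thesis using iXX by (simp add: EXX)
qed

lemma E_D_D: "expectation (\<lambda>\<omega>. ((X p \<omega> - X q \<omega>) / h) * ((X p' \<omega> - X q' \<omega>) / h))
   = (r (p' - p) - r (q' - p) - r (p' - q) + r (q' - q)) / h\<^sup>2"
proof -
  have "(\<lambda>\<omega>. ((X p \<omega> - X q \<omega>) / h) * ((X p' \<omega> - X q' \<omega>) / h)) =
     (\<lambda>\<omega>. (X p \<omega> * X p' \<omega> - X p \<omega> * X q' \<omega> - X q \<omega> * X p' \<omega> + X q \<omega> * X q' \<omega>) / h\<^sup>2)"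
    by (auto simp: algebra_simps power2_eq_square)
  then show ?thesis using iXX by (simp add: EXX)
qed

lemma E_D2: "expectation (\<lambda>\<omega>. ((X p \<omega> - X q \<omega>) / h)\<^sup>2) = (2 - 2 * r (p - q)) / h\<^sup>2"
proof -
  have "expectation (\<lambda>\<omega>. ((X p \<omega> - X q \<omega>) / h)\<^sup>2) =
      expectation (\<lambda>\<omega>. ((X p \<omega> - X q \<omega>) / h) * ((X p \<omega> - X q \<omega>) / h))"
    by (simp add: power2_eq_square)
  also have "\<dots> = (r (p - p) - r (q - p) - r (p - q) + r (q - q)) / h\<^sup>2" by (rule E_D_D)
  also have "r (q - p) = r (p - q)" using ev[of "p - q"] by simp
  finally show ?thesis using r0 by simp
qed

lemma Lv: "((\<lambda>h. (2 - 2 * r h) / h\<^sup>2) \<longlongrightarrow> 1) (at 0)"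
proof -
  have "((\<lambda>h. - ((r (0 + h) + r (0 - h) - 2 * r 0) / h\<^sup>2)) \<longlongrightarrow> - r'' 0) (at 0)"
    by (intro tendsto_minus SD[OF d1 d2])
  moreover have "- ((r (0 + h) + r (0 - h) - 2 * r 0) / h\<^sup>2) = (2 - 2 * r h) / h\<^sup>2" for h
    using ev[of h] r0 by (simp add: minus_divide_left algebra_simps)
  ultimately show ?thesis using r''0 by simp
qed

lemma L1: "((\<lambda>h. (r (t + h) - r t) / h) \<longlongrightarrow> r' t) (at 0)"
  using d1[of t] unfolding DERIV_def .

lemma abs_r: "\<bar>r t\<bar> \<le> 1"
proof -
  have "(expectation (\<lambda>\<omega>. X 0 \<omega> * X t \<omega>))\<^sup>2 \<le> expectation (\<lambda>\<omega>. (X 0 \<omega>)\<^sup>2) * expectation (\<lambda>\<omega>. (X t \<omega>)\<^sup>2)"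
    by (rule cauchy_schwarz_lc[OF gp inlc_X inlc_X]) auto
  then have "(r t)\<^sup>2 \<le> 1" by (simp add: EXX EX2)
  then show ?thesis by (simp add: abs_square_le_1)
qed

lemma abs_r': "\<bar>r' t\<bar> \<le> 1"
proof -
  have b: "((r (t + h) - r t) / h)\<^sup>2 \<le> 1 * ((2 - 2 * r h) / h\<^sup>2)" for h
  proof -
    have "(expectation (\<lambda>\<omega>. X 0 \<omega> * ((X (t + h) \<omega> - X t \<omega>) / h)))\<^sup>2
        \<le> expectation (\<lambda>\<omega>. (X 0 \<omega>)\<^sup>2) * expectation (\<lambda>\<omega>. ((X (t + h) \<omega> - X t \<omega>) / h)\<^sup>2)"
      by (rule cauchy_schwarz_lc[OF gp inlc_X inlc_dq]) auto
    then show ?thesis by (simp only: E_X_D E_D2 EX2) simp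
  qed
  have "(r' t)\<^sup>2 \<le> 1 * 1"
  proof (rule tendsto_le[OF _ tendsto_mult[OF tendsto_const Lv] tendsto_power[OF L1]])
    show "at (0::real) \<noteq> bot" by simp
    show "\<forall>\<^sub>F h in at 0. ((r (t + h) - r t) / h)\<^sup>2 \<le> 1 * ((2 - 2 * r h) / h\<^sup>2)"
      using b by simp
  qed
  then show ?thesis by (simp add: abs_square_le_1)
qed

lemma SD': "((\<lambda>h. (2 * r t - r (t - h) - r (t + h)) / h\<^sup>2) \<longlongrightarrow> - r'' t) (at 0)"
proof -
  have "((\<lambda>h. - ((r (t + h) + r (t - h) - 2 * r t) / h\<^sup>2)) \<longlongrightarrow> - r'' t) (at 0)"
    by (intro tendsto_minus SD[OF d1 d2])
  moreover have "- ((r (t + h) + r (t - h) - 2 * r t) / h\<^sup>2) = (2 * r t - r (t - h) - r (t + h)) / h\<^sup>2" for h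
    by (simp add: minus_divide_left algebra_simps)
  ultimately show ?thesis by simp
qed

lemma E_sd: "expectation (\<lambda>\<omega>. ((X h \<omega> - X 0 \<omega>) / h) * ((X (t + h) \<omega> - X t \<omega>) / h))
   = (2 * r t - r (t - h) - r (t + h)) / h\<^sup>2"
  by (subst E_D_D) simp

lemma abs_r'': "\<bar>r'' t\<bar> \<le> 1"
proof -
  have b: "((2 * r t - r (t - h) - r (t + h)) / h\<^sup>2)\<^sup>2 \<le> ((2 - 2 * r h) / h\<^sup>2) * ((2 - 2 * r h) / h\<^sup>2)" for h
  proof -
    have "(expectation (\<lambda>\<omega>. ((X h \<omega> - X 0 \<omega>) / h) * ((X (t + h) \<omega> - X t \<omega>) / h)))\<^sup>2
        \<le> expectation (\<lambda>\<omega>. ((X h \<omega> - X 0 \<omega>) / h)\<^sup>2) * expectation (\<lambda>\<omega>. ((X (t + h) \<omega> - X t \<omega>) / h)\<^sup>2)"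
      by (rule cauchy_schwarz_lc[OF gp inlc_dq inlc_dq]) auto
    then show ?thesis by (simp only: E_sd E_D2) simp
  qed
  have "(- r'' t)\<^sup>2 \<le> 1 * 1"
  proof (rule tendsto_le[OF _ tendsto_mult[OF Lv Lv] tendsto_power[OF SD']])
    show "at (0::real) \<noteq> bot" by simp
    show "\<forall>\<^sub>F h in at 0. ((2 * r t - r (t - h) - r (t + h)) / h\<^sup>2)\<^sup>2 \<le> ((2 - 2 * r h) / h\<^sup>2) * ((2 - 2 * r h) / h\<^sup>2)"
      using b by simp
  qed
  then show ?thesis by (simp add: abs_square_le_1)
qed

end

lemma powr_le_self: "0 \<le> x \<Longrightarrow> x \<le> 1 \<Longrightarrow> 1 \<le> p \<Longrightarrow> x powr p \<le> (x::real)"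
  by (cases "x = 0") (auto intro: powr_le_one_le)

context gsetup
begin

lemma rM[measurable]: "r \<in> borel_measurable borel"
  by (rule borel_measurable_continuous_onI, rule continuous_at_imp_continuous_on)
     (use d1 DERIV_isCont in blast)

lemma r'M[measurable]: "r' \<in> borel_measurable borel"
  by (rule borel_measurable_continuous_onI, rule continuous_at_imp_continuous_on)
     (use d2 DERIV_isCont in blast)

lemma r''M[measurable]: "r'' \<in> borel_measurable borel"
  by (rule deriv_meas[OF d2 r'M])

lemma r'_odd: "r' (-t) = - r' t"
proof -
  have "((\<lambda>x. r (- x)) has_real_derivative - r' (- t)) (at t)"
    using DERIV_mirror[where f=r and x=t and y="r' (-t)"] d1[of "-t"] by simp
  then have "(r has_real_derivative - r' (- t)) (at t)" by (simp add: ev)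
  from DERIV_unique[OF d1[of t] this] show ?thesis by simp
qed

lemma r''_even: "r'' (-t) = r'' t"
proof -
  have "((\<lambda>x. r' (- x)) has_real_derivative - r'' (- t)) (at t)"
    using DERIV_mirror[where f=r' and x=t and y="r'' (-t)"] d2[of "-t"] by simp
  then have "((\<lambda>x. - r' x) has_real_derivative - r'' (- t)) (at t)" by (simp add: r'_odd)
  moreover have "((\<lambda>x. - r' x) has_real_derivative - r'' t) (at t)" by (rule DERIV_minus[OF d2])
  ultimately show ?thesis using DERIV_unique by fastforce
qed

lemma LP:
  assumes si: "set_integrable lborel {0..} (\<lambda>\<tau>. \<bar>r \<tau>\<bar> + \<bar>r' \<tau>\<bar> + \<bar>r'' \<tau>\<bar>)"
  shows "\<forall>p::real. p \<ge> 1 \<longrightarrow>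
            integrable lborel (\<lambda>t. \<bar>r t\<bar> powr p) \<and>
            integrable lborel (\<lambda>t. \<bar>r' t\<bar> powr p) \<and>
            integrable lborel (\<lambda>t. \<bar>r'' t\<bar> powr p)"
proof (intro allI impI)
  fix p :: real assume p: "p \<ge> 1"
  define g where "g = (\<lambda>\<tau>. \<bar>r \<tau>\<bar> + \<bar>r' \<tau>\<bar> + \<bar>r'' \<tau>\<bar>)"
  have gi: "integrable lborel g"
    by (rule even_int) (use si in \<open>auto simp: g_def ev r'_odd r''_even\<close>)
  have gen: "integrable lborel (\<lambda>t. \<bar>f t\<bar> powr p)"
    if fm: "f \<in> borel_measurable borel" and b1: "\<And>t. \<bar>f t\<bar> \<le> 1" and bg: "\<And>t. \<bar>f t\<bar> \<le> g t" for f
  proof (rule Bochner_Integration.integrable_bound[OF gi])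
    show "(\<lambda>t. \<bar>f t\<bar> powr p) \<in> borel_measurable lborel" using fm by (intro measurable_abs_powr) simp
    show "AE x in lborel. norm (\<bar>f x\<bar> powr p) \<le> norm (g x)"
    proof (rule AE_I2)
      fix x
      have "\<bar>f x\<bar> powr p \<le> \<bar>f x\<bar>" using b1[of x] p by (intro powr_le_self) auto
      moreover have "0 \<le> g x" unfolding g_def by simp
      ultimately show "norm (\<bar>f x\<bar> powr p) \<le> norm (g x)" using bg[of x] by simp
    qed
  qed
  show "integrable lborel (\<lambda>t. \<bar>r t\<bar> powr p) \<and> integrable lborel (\<lambda>t. \<bar>r' t\<bar> powr p) \<and>
        integrable lborel (\<lambda>t. \<bar>r'' t\<bar> powr p)"
    by (intro conjI gen) (auto simp: g_def abs_r abs_r' abs_r'')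
qed

end

context gsetup
begin

lemma alpha_eventually:
  assumes mu: "\<mu> > 0" and as: "alpha_coeff M X \<sim>[at_top] (\<lambda>T. T powr (-\<mu>))"
  obtains T0 where "T0 \<ge> 1" "\<And>T. T \<ge> T0 \<Longrightarrow> alpha_coeff M X T \<le> 2 * T powr (-\<mu>)"
proof -
  let ?a = "alpha_coeff M X"
  have "((\<lambda>x. if ?a x = 0 \<and> x powr (-\<mu>) = 0 then 1 else ?a x / x powr (-\<mu>)) \<longlongrightarrow> 1) at_top"
    by (rule asymp_equivD[OF as])
  then have "eventually (\<lambda>x. (if ?a x = 0 \<and> x powr (-\<mu>) = 0 then 1 else ?a x / x powr (-\<mu>)) < 2) at_top"
    by (rule order_tendstoD) simp
  moreover have "eventually (\<lambda>x::real. x \<ge> 1) at_top" by (rule eventually_ge_at_top)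
  ultimately have "eventually (\<lambda>x. x \<ge> 1 \<and> ?a x \<le> 2 * x powr (-\<mu>)) at_top"
  proof eventually_elim
    case (elim x)
    then have p: "x powr (-\<mu>) > 0" by simp
    with elim have "?a x / x powr (-\<mu>) < 2" by simp
    with p show ?case using elim by (simp add: divide_less_eq)
  qed
  then obtain T0 where T0: "\<And>x. x \<ge> T0 \<Longrightarrow> x \<ge> 1 \<and> ?a x \<le> 2 * x powr (-\<mu>)"
    unfolding eventually_at_top_linorder by blast
  show ?thesis
    by (rule that[of "max T0 1"]) (use T0 in auto)
qed

lemma al_mono_bound:
  assumes "T0 \<ge> 1" "\<And>T. T \<ge> T0 \<Longrightarrow> alpha_coeff M X T \<le> 2 * T powr (-\<mu>)" "\<mu> > 0"
    and "s \<ge> T0" "s \<ge> t - 1" "t \<ge> T0 + 1"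
  shows "alpha_coeff M X s \<le> 2 * (t - 1) powr (-\<mu>)"
proof -
  have "alpha_coeff M X s \<le> 2 * s powr (-\<mu>)" using assms(2,4) by simp
  also have "s powr (-\<mu>) \<le> (t - 1) powr (-\<mu>)"
    by (rule powr_mono2') (use assms in auto)
  finally show ?thesis by simp
qed

lemma bound_r:
  assumes "t \<ge> 0"
  shows "(r t)\<^sup>2 \<le> 16 * exp 1 * alpha_coeff M X t"
proof -
  have "(expectation (\<lambda>\<omega>. X 0 \<omega> * X t \<omega>))\<^sup>2
     \<le> 16 * exp 1 * alpha_coeff M X t * (max (expectation (\<lambda>\<omega>. (X 0 \<omega>)\<^sup>2)) (expectation (\<lambda>\<omega>. (X t \<omega>)\<^sup>2)))\<^sup>2"
    by (rule key[OF gp inlc_X inlc_X]) auto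
  then show ?thesis by (simp add: EXX EX2)
qed

lemma bound_r':
  assumes "t \<ge> 0"
  shows "(r' t)\<^sup>2 \<le> 16 * exp 1 * alpha_coeff M X t"
proof -
  have b: "((r (t + h) - r t) / h)\<^sup>2 \<le> 16 * exp 1 * alpha_coeff M X t * (max 1 ((2 - 2 * r h) / h\<^sup>2))\<^sup>2"
    if "h > 0" for h
  proof -
    have "(expectation (\<lambda>\<omega>. X 0 \<omega> * ((X (t + h) \<omega> - X t \<omega>) / h)))\<^sup>2
       \<le> 16 * exp 1 * alpha_coeff M X t * (max (expectation (\<lambda>\<omega>. (X 0 \<omega>)\<^sup>2)) (expectation (\<lambda>\<omega>. ((X (t + h) \<omega> - X t \<omega>) / h)\<^sup>2)))\<^sup>2"
      by (rule key[OF gp inlc_X inlc_dq]) (use that in auto)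
    then show ?thesis by (simp only: E_X_D E_D2 EX2) simp
  qed
  have l1: "((\<lambda>h. ((r (t + h) - r t) / h)\<^sup>2) \<longlongrightarrow> (r' t)\<^sup>2) (at_right 0)"
    using tendsto_power[OF L1] filterlim_at_split by blast
  have l2: "((\<lambda>h. 16 * exp 1 * alpha_coeff M X t * (max 1 ((2 - 2 * r h) / h\<^sup>2))\<^sup>2) \<longlongrightarrow>
      16 * exp 1 * alpha_coeff M X t * (max 1 1)\<^sup>2) (at_right 0)"
  proof -
    have "((\<lambda>h. (2 - 2 * r h) / h\<^sup>2) \<longlongrightarrow> 1) (at_right 0)" using Lv filterlim_at_split by blast
    then show ?thesis by (intro tendsto_intros)
  qed
  have "(r' t)\<^sup>2 \<le> 16 * exp 1 * alpha_coeff M X t * (max 1 1)\<^sup>2"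
  proof (rule tendsto_le[OF _ l2 l1])
    show "at_right (0::real) \<noteq> bot" by simp
    show "\<forall>\<^sub>F h in at_right 0. ((r (t + h) - r t) / h)\<^sup>2 \<le> 16 * exp 1 * alpha_coeff M X t * (max 1 ((2 - 2 * r h) / h\<^sup>2))\<^sup>2"
      using b by (auto simp: eventually_at_right_less intro: eventually_mono[OF eventually_at_right_less])
  qed
  then show ?thesis by simp
qed

lemma bound_r'':
  assumes T0: "T0 \<ge> 1" "\<And>T. T \<ge> T0 \<Longrightarrow> alpha_coeff M X T \<le> 2 * T powr (-\<mu>)" and mu: "\<mu> > 0"
    and t: "t \<ge> T0 + 1"
  shows "(r'' t)\<^sup>2 \<le> 32 * exp 1 * (t - 1) powr (-\<mu>)"
proof -
  let ?v = "\<lambda>h. (2 - 2 * r h) / h\<^sup>2"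
  have b: "((2 * r t - r (t - h) - r (t + h)) / h\<^sup>2)\<^sup>2 \<le> 32 * exp 1 * (t - 1) powr (-\<mu>) * (?v h)\<^sup>2"
    if h: "h < 0" "h > -1" for h
  proof -
    have "(expectation (\<lambda>\<omega>. ((X h \<omega> - X 0 \<omega>) / h) * ((X (t + h) \<omega> - X t \<omega>) / h)))\<^sup>2
       \<le> 16 * exp 1 * alpha_coeff M X (t + h) * (max (expectation (\<lambda>\<omega>. ((X h \<omega> - X 0 \<omega>) / h)\<^sup>2)) (expectation (\<lambda>\<omega>. ((X (t + h) \<omega> - X t \<omega>) / h)\<^sup>2)))\<^sup>2"
      by (rule key[OF gp inlc_dq inlc_dq]) (use h in auto)
    then have "((2 * r t - r (t - h) - r (t + h)) / h\<^sup>2)\<^sup>2 \<le> 16 * exp 1 * alpha_coeff M X (t + h) * (?v h)\<^sup>2"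
      by (simp only: E_sd E_D2) simp
    also have "\<dots> \<le> 16 * exp 1 * (2 * (t - 1) powr (-\<mu>)) * (?v h)\<^sup>2"
      by (intro mult_right_mono mult_left_mono al_mono_bound[OF T0 mu]) (use h t in auto)
    finally show ?thesis by simp
  qed
  have l1: "((\<lambda>h. ((2 * r t - r (t - h) - r (t + h)) / h\<^sup>2)\<^sup>2) \<longlongrightarrow> (- r'' t)\<^sup>2) (at_left 0)"
    using tendsto_power[OF SD'] filterlim_at_split by blast
  have l2: "((\<lambda>h. 32 * exp 1 * (t - 1) powr (-\<mu>) * (?v h)\<^sup>2) \<longlongrightarrow> 32 * exp 1 * (t - 1) powr (-\<mu>) * 1\<^sup>2) (at_left 0)"
  proof -
    have "(?v \<longlongrightarrow> 1) (at_left 0)" using Lv filterlim_at_split by blast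
    then show ?thesis by (intro tendsto_intros)
  qed
  have "(- r'' t)\<^sup>2 \<le> 32 * exp 1 * (t - 1) powr (-\<mu>) * 1\<^sup>2"
  proof (rule tendsto_le[OF _ l2 l1])
    show "at_left (0::real) \<noteq> bot" by simp
    have "eventually (\<lambda>h::real. h > -1) (at_left 0)"
      using order_tendstoD(1)[OF tendsto_ident_at[of "0::real" "{..<0}"], of "-1"] by simp
    moreover have "eventually (\<lambda>h::real. h < 0) (at_left 0)" by (simp add: eventually_at_filter)
    ultimately show "\<forall>\<^sub>F h in at_left 0. ((2 * r t - r (t - h) - r (t + h)) / h\<^sup>2)\<^sup>2 \<le> 32 * exp 1 * (t - 1) powr (-\<mu>) * (?v h)\<^sup>2"
      by eventually_elim (rule b)
  qed
  then show ?thesis by simp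
qed

end

lemma sq_bound:
  fixes x y \<mu> K :: real
  assumes "x\<^sup>2 \<le> K * y powr (-\<mu>)" "y > 0" "K \<ge> 0"
  shows "\<bar>x\<bar> \<le> sqrt K * y powr (-\<mu> / 2)"
proof (rule power2_le_imp_le)
  have "(sqrt K * y powr (-\<mu> / 2))\<^sup>2 = K * (y powr (-\<mu> / 2) * y powr (-\<mu> / 2))"
    using assms(3) by (simp add: power2_eq_square algebra_simps)
  also have "y powr (-\<mu> / 2) * y powr (-\<mu> / 2) = y powr (-\<mu>)"
    by (simp add: powr_add[symmetric])
  finally show "\<bar>x\<bar>\<^sup>2 \<le> (sqrt K * y powr (-\<mu> / 2))\<^sup>2" using assms(1) by simp
  show "0 \<le> sqrt K * y powr (-\<mu> / 2)" using assms by simp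
qed

context gsetup
begin

lemma partc:
  assumes mu: "\<mu> > 4" and as: "alpha_coeff M X \<sim>[at_top] (\<lambda>T. T powr (-\<mu>))"
  shows "set_integrable lborel {0..} (\<lambda>\<tau>. \<bar>r \<tau>\<bar> + \<bar>r' \<tau>\<bar> + \<bar>r'' \<tau>\<bar>)"
proof -
  have mu0: "\<mu> > 0" using mu by simp
  obtain T0 where T0: "T0 \<ge> 1" "\<And>T. T \<ge> T0 \<Longrightarrow> alpha_coeff M X T \<le> 2 * T powr (-\<mu>)"
    using alpha_eventually[OF mu0 as] by blast
  define c where "c = sqrt (32 * exp 1)"
  define T1 where "T1 = T0 + 2"
  have c0: "c \<ge> 0" unfolding c_def by simp
  have tail: "\<bar>f t\<bar> \<le> c * (t - 1) powr (-\<mu> / 2)"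
    if "t \<ge> T0 + 1" "(f t)\<^sup>2 \<le> 32 * exp 1 * (t - 1) powr (-\<mu>)" for f t
    unfolding c_def by (rule sq_bound) (use that T0 in auto)
  have al: "16 * exp 1 * alpha_coeff M X t \<le> 32 * exp 1 * (t - 1) powr (-\<mu>)" if "t \<ge> T0 + 1" for t
    using al_mono_bound[OF T0 mu0, of t t] that by simp
  have gt: "\<bar>r t\<bar> + \<bar>r' t\<bar> + \<bar>r'' t\<bar> \<le> 3 * c * (t - 1) powr (-\<mu> / 2)" if t: "t \<ge> T0 + 1" for t
  proof -
    have t0: "t \<ge> 0" using t T0 by simp
    have y: "t - 1 > 0" using t T0 by simp
    have K: "32 * exp 1 \<ge> (0::real)" by simp
    have "(r t)\<^sup>2 \<le> 32 * exp 1 * (t - 1) powr (-\<mu>)" using bound_r[OF t0] al[OF t] by linarith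
    from sq_bound[OF this y K] have "\<bar>r t\<bar> \<le> c * (t - 1) powr (-\<mu> / 2)" unfolding c_def .
    moreover have "(r' t)\<^sup>2 \<le> 32 * exp 1 * (t - 1) powr (-\<mu>)" using bound_r'[OF t0] al[OF t] by linarith
    from sq_bound[OF this y K] have "\<bar>r' t\<bar> \<le> c * (t - 1) powr (-\<mu> / 2)" unfolding c_def .
    moreover have "(r'' t)\<^sup>2 \<le> 32 * exp 1 * (t - 1) powr (-\<mu>)" using bound_r''[OF T0 mu0 t] by linarith
    from sq_bound[OF this y K] have "\<bar>r'' t\<bar> \<le> c * (t - 1) powr (-\<mu> / 2)" unfolding c_def .
    ultimately show ?thesis by simp
  qed
  define H where "H t = indicator {0..T1} t * 3 + indicator {T1..} t * (3 * c * (t - 1) powr (-\<mu> / 2))" for t :: real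
  have i1: "integrable lborel (\<lambda>t. indicator {0..T1} t * (3::real))"
    using integrable_indicator_iff[of lborel "{0..T1}"] T0 by (simp add: T1_def)
  have i2: "integrable lborel (\<lambda>t. indicator {T1..} t * (t - 1) powr (-\<mu> / 2))"
  proof -
    have "integrable lborel (\<lambda>x. indicator {T0 + 1..} x * x powr (-\<mu> / 2))"
      by (rule powr_tail_int) (use T0 mu in auto)
    then have "integrable lborel (\<lambda>x. indicator {T0 + 1..} (-1 + 1 * x) * (-1 + 1 * x) powr (-\<mu> / 2))"
      using lborel_integrable_real_affine_iff[where f="\<lambda>x. indicator {T0 + 1..} x * x powr (-\<mu> / 2)" and c=1 and t="-1"]
      by simp
    moreover have "indicator {T0 + 1..} (-1 + 1 * x) = (indicator {T1..} x :: real)" for x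
      unfolding T1_def by (simp add: indicator_def)
    ultimately show ?thesis by simp
  qed
  have iH: "integrable lborel H"
    unfolding H_def using i1 i2 by (intro Bochner_Integration.integrable_add) (auto intro: integrable_mult_right simp: mult.left_commute[of _ "3 * c"])
  show ?thesis unfolding set_integrable_def
  proof (rule Bochner_Integration.integrable_bound[OF iH], simp, rule AE_I2)
    fix t :: real
    have g3: "\<bar>r t\<bar> + \<bar>r' t\<bar> + \<bar>r'' t\<bar> \<le> 3" using abs_r[of t] abs_r'[of t] abs_r''[of t] by simp
    have nn: "0 \<le> 3 * c * (t - 1) powr (-\<mu> / 2)" using c0 by simp
    show "norm (indicator {0..} t *\<^sub>R (\<bar>r t\<bar> + \<bar>r' t\<bar> + \<bar>r'' t\<bar>)) \<le> norm (H t)"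
    proof (cases "t < 0")
      case True then show ?thesis by (simp add: indicator_def)
    next
      case False
      show ?thesis
      proof (cases "t \<le> T1")
        case True
        have "H t \<ge> 3" unfolding H_def using True False nn by (simp add: indicator_def)
        then show ?thesis using False g3 by (simp add: indicator_def)
      next
        case True2: False
        have "H t = 3 * c * (t - 1) powr (-\<mu> / 2)" unfolding H_def using True2 by (simp add: indicator_def)
        moreover have "t \<ge> T0 + 1" using True2 unfolding T1_def by simp
        ultimately show ?thesis using gt[of t] False nn by (simp add: indicator_def)
      qed
    qed
  qed
qed

end

theorem lemma1:
  fixes M :: "'a measure" and X :: "real \<Rightarrow> 'a \<Rightarrow> real"
    and r r' r'' :: "real \<Rightarrow> real"
  assumes "prob_space M"
    and "centered_gaussian_process M X"
    and cov: "\<And>t \<tau>. prob_space.expectation M (\<lambda>\<omega>. X t \<omega> * X (t + \<tau>) \<omega>) = r \<tau>"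
    and d1: "\<And>t. (r has_real_derivative r' t) (at t)"
    and d2: "\<And>t. (r' has_real_derivative r'' t) (at t)"
    and "r 0 = 1" and "r'' 0 = -1"
  shows "(\<forall>t. \<bar>r t\<bar> \<le> 1 \<and> \<bar>r' t\<bar> \<le> 1 \<and> \<bar>r'' t\<bar> \<le> 1)
    \<and> (set_integrable lborel {0..} (\<lambda>\<tau>. \<bar>r \<tau>\<bar> + \<bar>r' \<tau>\<bar> + \<bar>r'' \<tau>\<bar>) \<longrightarrow>
         (\<forall>p::real. p \<ge> 1 \<longrightarrow>
            integrable lborel (\<lambda>t. \<bar>r t\<bar> powr p) \<and>
            integrable lborel (\<lambda>t. \<bar>r' t\<bar> powr p) \<and>
            integrable lborel (\<lambda>t. \<bar>r'' t\<bar> powr p)))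
    \<and> (\<forall>\<mu>::real. \<mu> > 4 \<and> alpha_mixing M X \<and>
          (alpha_coeff M X \<sim>[at_top] (\<lambda>T. T powr (-\<mu>))) \<longrightarrow>
         (\<forall>p::real. p \<ge> 1 \<longrightarrow>
            integrable lborel (\<lambda>t. \<bar>r t\<bar> powr p) \<and>
            integrable lborel (\<lambda>t. \<bar>r' t\<bar> powr p) \<and>
            integrable lborel (\<lambda>t. \<bar>r'' t\<bar> powr p))
         \<and> set_integrable lborel {0..} (\<lambda>\<tau>. \<bar>r \<tau>\<bar> + \<bar>r' \<tau>\<bar> + \<bar>r'' \<tau>\<bar>))"
proof -
  interpret gsetup M X r r' r''
    using assms unfolding gsetup_def gsetup_axioms_def by auto
  have A: "\<forall>t. \<bar>r t\<bar> \<le> 1 \<and> \<bar>r' t\<bar> \<le> 1 \<and> \<bar>r'' t\<bar> \<le> 1"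
    using abs_r abs_r' abs_r'' by blast
  have C: "(\<forall>p::real. p \<ge> 1 \<longrightarrow>
            integrable lborel (\<lambda>t. \<bar>r t\<bar> powr p) \<and>
            integrable lborel (\<lambda>t. \<bar>r' t\<bar> powr p) \<and>
            integrable lborel (\<lambda>t. \<bar>r'' t\<bar> powr p))
         \<and> set_integrable lborel {0..} (\<lambda>\<tau>. \<bar>r \<tau>\<bar> + \<bar>r' \<tau>\<bar> + \<bar>r'' \<tau>\<bar>)"
    if "\<mu> > 4 \<and> alpha_mixing M X \<and> (alpha_coeff M X \<sim>[at_top] (\<lambda>T. T powr (-\<mu>)))" for \<mu> :: real
  proof -
    have si: "set_integrable lborel {0..} (\<lambda>\<tau>. \<bar>r \<tau>\<bar> + \<bar>r' \<tau>\<bar> + \<bar>r'' \<tau>\<bar>)"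
      using partc[of \<mu>] that by blast
    show ?thesis using LP[OF si] si by blast
  qed
  show ?thesis using A LP C by blast
qed

end
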